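(* In the setting below with $P=\mathfrak A$ and the absolute error criterion, suppose $\{S_d\}$ is polynomially tractable with constants $C,p>0$, $q\ge0$. Then: (i) for every polynomial $\mathcal P$ with $\mathcal P(d)>0$ for $d\in\mathbb N$, $\lambda_{d,\psi(1)}\,\mathcal P(d)\to0$ as $d\to\infty$ (i.e. $\epsilon_d^{\rm init}$ tends to zero faster than the inverse of any polynomial); (ii) $\lambda\in\ell_\tau$ for every $\tau>p/2$, and for every such $\tau$ and every $\delta>0$ there exists $d_0\in\mathbb N$ with $$\ln\big(\|\lambda\|_{\ell_\tau}^\tau\big)-\delta\le\frac1d\sum_{k=1}^{a_d}\ln\Big(\frac{\|\lambda\|_{\ell_\tau}^\tau}{\lambda_k^\tau}\Big)\quad\text{for all }d\ge d_0;$$ (iii) consequently $\lambda_1<1$ or $\lim_{d\to\infty}a_d=\infty$.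
   Context: Setting: $S_1:H_1\to G_1$ is a compact linear operator between real Hilbert spaces ($H_1$ infinite-dimensional separable); $\lambda=(\lambda_m)_{m\in\mathbb N}$, $\lambda_1\ge\lambda_2\ge\dots\ge0$, are the eigenvalues of $S_1^\dagger S_1$. $S_d=S_1^{\otimes d}:H_1^{\otimes d}\to G_1^{\otimes d}$. For each $d$ fix $\emptyset\ne I_d=\{i_1<\dots<i_{a_d}\}\subset\{1,\dots,d\}$ ($I_1=\{1\}$), put $a_d=\#I_d$, $b_d=d-a_d$, and fix one type $P\in\{\mathfrak S,\mathfrak A\}$ for all $d$; the problem $\{S_d\}$ is the family of restrictions of $S_d$ to the $I_d$-symmetric subspace (if $P=\mathfrak S$) or $I_d$-antisymmetric subspace (if $P=\mathfrak A$) of $H_1^{\otimes d}$, i.e. the range of $\frac1{a_d!}\sum_{\pi}(\pm1)U_\pi$, the sum over permutations $\pi$ of $\{1,\dots,d\}$ fixing all points outside $I_d$, $U_\pi(f_1\otimes\cdots\otimes f_d)=f_{\pi(1)}\otimes\cdots\otimes f_{\pi(d)}$, sign $(-1)^{|\pi|}$ used for $\mathfrak A$. Let $\nabla_d=\{k\in\mathbb N^d:k_{i_1}\le\dots\le k_{i_{a_d}}\}$ for $P=\mathfrak S$ and with strict inequalities for $P=\mathfrak A$; $\lambda_{d,k}=\prod_{l=1}^d\lambda_{k_l}$; $\psi:\mathbb N\to\nabla_d$ a bijection with $\lambda_{d,\psi(1)}\ge\lambda_{d,\psi(2)}\ge\cdots$. These are exactly the eigenvalues of $S_d^\dagger S_d$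 on the subspace, and the information complexity (absolute error) is $n(\epsilon,d)=\#\{k\in\nabla_d:\lambda_{d,k}>\epsilon^2\}$, the initial error $\epsilon^{\rm init}_d=\sqrt{\lambda_{d,\psi(1)}}$ (equal to $\lambda_1^{d/2}$ if $P=\mathfrak S$, and $\sqrt{\lambda_1^{b_d}\lambda_1\lambda_2\cdots\lambda_{a_d}}$ if $P=\mathfrak A$). Polynomially tractable: $\exists C,p>0,q\ge0$ with $n(\epsilon,d)\le C\epsilon^{-p}d^q$ for all $d\in\mathbb N,\epsilon\in(0,1]$; strongly polynomially tractable: this with $q=0$. Standing assumptions: $\lambda_2>0$ and $\epsilon_d^{\rm init}>0$ for all $d$. $\ell_\tau$: sequences with $\|\lambda\|_{\ell_\tau}^\tau=\sum_m\lambda_m^\tau<\infty$. *)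

theory Defs
  imports "HOL-Analysis.Analysis" "HOL-Computational_Algebra.Polynomial"
begin

text \<open>Eigenvalues of S_1^dagger S_1 are lam 1 >= lam 2 >= ... >= 0 (index 0 unused).
  Multi-indices k in N^d are functions nat => nat, with k l >= 1 for l in {1..d}
  and k l = 0 outside {1..d}.\<close>

definition a_of :: "(nat \<Rightarrow> nat set) \<Rightarrow> nat \<Rightarrow> nat" where
  "a_of I d = card (I d)"

definition nabla_A :: "(nat \<Rightarrow> nat set) \<Rightarrow> nat \<Rightarrow> (nat \<Rightarrow> nat) set" where
  "nabla_A I d = {k. (\<forall>l\<in>{1..d}. 1 \<le> k l) \<and> (\<forall>l. l \<notin> {1..d} \<longrightarrow> k l = 0)
                    \<and> (\<forall>i\<in>I d. \<forall>j\<in>I d. i < j \<longrightarrow> k i < k j)}"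

definition lam_dk :: "(nat \<Rightarrow> real) \<Rightarrow> nat \<Rightarrow> (nat \<Rightarrow> nat) \<Rightarrow> real" where
  "lam_dk lam d k = (\<Prod>l=1..d. lam (k l))"

text \<open>Information complexity n(eps,d) for the absolute error criterion.\<close>
definition info_set :: "(nat \<Rightarrow> real) \<Rightarrow> (nat \<Rightarrow> nat set) \<Rightarrow> real \<Rightarrow> nat \<Rightarrow> (nat \<Rightarrow> nat) set" where
  "info_set lam I eps d = {k \<in> nabla_A I d. lam_dk lam d k > eps\<^sup>2}"

text \<open>Largest eigenvalue lambda_{d,psi(1)} = (eps_d^init)^2.\<close>
definition lam_init :: "(nat \<Rightarrow> real) \<Rightarrow> (nat \<Rightarrow> nat set) \<Rightarrow> nat \<Rightarrow> real" where
  "lam_init lam I d = Sup (lam_dk lam d ` nabla_A I d)"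

definition poly_tract_const :: "(nat \<Rightarrow> real) \<Rightarrow> (nat \<Rightarrow> nat set) \<Rightarrow> real \<Rightarrow> real \<Rightarrow> real \<Rightarrow> bool" where
  "poly_tract_const lam I C p q \<longleftrightarrow>
     (\<forall>d\<ge>1. \<forall>eps. 0 < eps \<and> eps \<le> 1 \<longrightarrow>
        finite (info_set lam I eps d) \<and>
        real (card (info_set lam I eps d)) \<le> C * eps powr (-p) * real d powr q)"

end

theory Submission imports Defs "HOL-Real_Asymp.Real_Asymp" begin

lemma dyadic_piece:
  fixes y :: real
  assumes "0 < y" "y \<le> 1"
  obtains j :: nat where "2 powr (- real j - 1) < y" "y \<le> 2 powr (- real j)"
proof -
  define z where "z = log 2 (1/y)"
  have z0: "z \<ge> 0" using assms by (simp add: z_def)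
  define j where "j = nat \<lfloor>z\<rfloor>"
  have j1: "real j \<le> z" and j2: "z < real j + 1" using z0 by (auto simp: j_def)
  have yz: "y = 2 powr (- z)" using assms by (simp add: z_def powr_minus_divide)
  show ?thesis
  proof
    show "2 powr (- real j - 1) < y" unfolding yz using j2 by simp
    show "y \<le> 2 powr (- real j)" unfolding yz using j1 by simp
  qed
qed

lemma sum_bound:
  fixes g :: "'x \<Rightarrow> real" and X :: "'x set"
  assumes fin: "finite X" and gnn: "\<And>x. x\<in>X \<Longrightarrow> 0 \<le> g x" and gG: "\<And>x. x\<in>X \<Longrightarrow> g x \<le> G"
    and B0: "B \<ge> 0"
    and cnt: "\<And>t. 0<t \<Longrightarrow> t \<le> 1 \<Longrightarrow> real (card {x\<in>X. g x > t}) \<le> B * t powr (-p/2)"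
    and p0: "p > 0" and tau: "\<tau> > p/2"
  shows "(\<Sum>x\<in>X. g x powr \<tau>) \<le> B * (G powr \<tau> + 2 powr (p/2) / (1 - 2 powr (p/2 - \<tau>)))"
proof -
  define X1 where "X1 = {x\<in>X. g x > 1}"
  define X2 where "X2 = {x\<in>X. 0 < g x \<and> g x \<le> 1}"
  define X0 where "X0 = {x\<in>X. g x = 0}"
  define \<sigma> where "\<sigma> = 2 powr (p/2 - \<tau>)"
  have sg0: "0 < \<sigma>" by (simp add: \<sigma>_def)
  have "2 powr (p/2 - \<tau>) < 2 powr 0" by (rule powr_less_mono) (use tau in auto)
  then have sg1: "\<sigma> < 1" by (simp add: \<sigma>_def)
  have Xeq: "X = X1 \<union> (X2 \<union> X0)" using gnn by (force simp: X1_def X2_def X0_def)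
  have sumX: "(\<Sum>x\<in>X. g x powr \<tau>) = (\<Sum>x\<in>X1. g x powr \<tau>) + (\<Sum>x\<in>X2. g x powr \<tau>) + (\<Sum>x\<in>X0. g x powr \<tau>)"
  proof -
    have f: "finite X1" "finite X2" "finite X0" using fin by (auto simp: X1_def X2_def X0_def)
    have "(\<Sum>x\<in>X. g x powr \<tau>) = (\<Sum>x\<in>X1. g x powr \<tau>) + (\<Sum>x\<in>X2 \<union> X0. g x powr \<tau>)"
      by (subst Xeq, rule sum.union_disjoint) (use f in \<open>auto simp: X1_def X2_def X0_def\<close>)
    moreover have "(\<Sum>x\<in>X2 \<union> X0. g x powr \<tau>) = (\<Sum>x\<in>X2. g x powr \<tau>) + (\<Sum>x\<in>X0. g x powr \<tau>)"
      by (rule sum.union_disjoint) (use f in \<open>auto simp: X1_def X2_def X0_def\<close>)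
    ultimately show ?thesis by simp
  qed
  have s0: "(\<Sum>x\<in>X0. g x powr \<tau>) = 0" by (simp add: X0_def)
  have s1: "(\<Sum>x\<in>X1. g x powr \<tau>) \<le> B * G powr \<tau>"
  proof -
    have "(\<Sum>x\<in>X1. g x powr \<tau>) \<le> (\<Sum>x\<in>X1. G powr \<tau>)"
      by (rule sum_mono, rule powr_mono2) (use tau p0 gnn gG in \<open>auto simp: X1_def\<close>)
    also have "\<dots> = real (card X1) * G powr \<tau>" by simp
    also have "\<dots> \<le> B * G powr \<tau>"
      using cnt[of 1] by (intro mult_right_mono) (auto simp: X1_def)
    finally show ?thesis .
  qed
  have s2: "(\<Sum>x\<in>X2. g x powr \<tau>) \<le> B * (2 powr (p/2) / (1 - \<sigma>))"
  proof -
    define j where "j x = (SOME j::nat. 2 powr (- real j - 1) < g x \<and> g x \<le> 2 powr (- real j))" for x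
    have jx: "2 powr (- real (j x) - 1) < g x \<and> g x \<le> 2 powr (- real (j x))" if "x \<in> X2" for x
    proof -
      have gx: "0 < g x" "g x \<le> 1" using that by (auto simp: X2_def)
      obtain k :: nat where "2 powr (- real k - 1) < g x" "g x \<le> 2 powr (- real k)"
        using dyadic_piece[OF gx(1) gx(2)] by metis
      then show ?thesis unfolding j_def by (rule someI[where x=k, OF conjI])
    qed
    have "(\<Sum>x\<in>X2. g x powr \<tau>) \<le> (\<Sum>x\<in>X2. \<sigma>' ^ j x)" if "\<sigma>' = 2 powr (- \<tau>)" for \<sigma>'
    proof (rule sum_mono)
      fix x assume x: "x \<in> X2"
      have "g x powr \<tau> \<le> (2 powr (- real (j x))) powr \<tau>"
        using jx[OF x] x tau p0 by (intro powr_mono2) (auto simp: X2_def)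
      also have "\<dots> = \<sigma>' ^ j x" unfolding that
        by (simp add: powr_powr powr_realpow[symmetric] mult.commute)
      finally show "g x powr \<tau> \<le> \<sigma>' ^ j x" .
    qed
    then have A: "(\<Sum>x\<in>X2. g x powr \<tau>) \<le> (\<Sum>x\<in>X2. (2 powr (- \<tau>)) ^ j x)" by simp
    also have "\<dots> = (\<Sum>k\<in>j ` X2. (\<Sum>x\<in>{x\<in>X2. j x = k}. (2 powr (- \<tau>)) ^ j x))"
      by (rule sum.image_gen) (use fin in \<open>simp add: X2_def\<close>)
    also have "\<dots> = (\<Sum>k\<in>j ` X2. real (card {x\<in>X2. j x = k}) * (2 powr (- \<tau>)) ^ k)"
      by (intro sum.cong refl) simp
    also have "\<dots> \<le> (\<Sum>k\<in>j ` X2. B * 2 powr (p/2) * \<sigma> ^ k)"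
    proof (rule sum_mono)
      fix k assume k: "k \<in> j ` X2"
      have sub: "{x\<in>X2. j x = k} \<subseteq> {x\<in>X. g x > 2 powr (- real k - 1)}"
        using jx by (auto simp: X2_def)
      have "real (card {x\<in>X2. j x = k}) \<le> real (card {x\<in>X. g x > 2 powr (- real k - 1)})"
        using card_mono[OF _ sub] fin by auto
      also have "\<dots> \<le> B * (2 powr (- real k - 1)) powr (-p/2)"
      proof (rule cnt)
        have "2 powr (- real k - 1) \<le> 2 powr 0" by (rule powr_mono) auto
        then show "2 powr (- real k - 1) \<le> 1" by simp
      qed simp
      also have "(2 powr (- real k - 1)) powr (-p/2) = 2 powr (p/2) * 2 powr (real k * (p/2))"
        unfolding powr_powr powr_add[symmetric] by (rule arg_cong[where f="\<lambda>x. 2 powr x"]) (simp add: field_simps)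
      finally have c: "real (card {x\<in>X2. j x = k}) \<le> B * (2 powr (p/2) * 2 powr (real k * (p/2)))" .
      have "real (card {x\<in>X2. j x = k}) * (2 powr (- \<tau>)) ^ k \<le> B * (2 powr (p/2) * 2 powr (real k * (p/2))) * (2 powr (- \<tau>)) ^ k"
        by (rule mult_right_mono[OF c]) simp
      also have "\<dots> = B * 2 powr (p/2) * \<sigma> ^ k"
        by (simp add: \<sigma>_def powr_realpow[symmetric] powr_powr powr_add[symmetric] algebra_simps)
      finally show "real (card {x\<in>X2. j x = k}) * (2 powr (- \<tau>)) ^ k \<le> B * 2 powr (p/2) * \<sigma> ^ k" .
    qed
    also have "\<dots> = B * 2 powr (p/2) * (\<Sum>k\<in>j ` X2. \<sigma> ^ k)" by (simp add: sum_distrib_left)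
    also have "\<dots> \<le> B * 2 powr (p/2) * (\<Sum>k. \<sigma> ^ k)"
      by (intro mult_left_mono sum_le_suminf summable_geometric) (use sg0 sg1 B0 fin in \<open>auto simp: X2_def\<close>)
    also have "\<dots> = B * (2 powr (p/2) / (1 - \<sigma>))"
      using suminf_geometric[of \<sigma>] sg0 sg1 by simp
    finally show ?thesis .
  qed
  show ?thesis using sumX s0 s1 s2 by (simp add: \<sigma>_def distrib_left)
qed
lemma prod_inj_le:
  fixes lam :: "nat \<Rightarrow> real" and g :: "'x \<Rightarrow> nat"
  assumes nn: "\<And>m. m \<ge> 1 \<Longrightarrow> lam m \<ge> 0"
    and mono: "\<And>m n. 1 \<le> m \<Longrightarrow> m \<le> n \<Longrightarrow> lam n \<le> lam m"
  shows "finite A \<Longrightarrow> inj_on g A \<Longrightarrow> (\<forall>x\<in>A. g x \<ge> 1) \<Longrightarrow>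
    (\<Prod>x\<in>A. lam (g x)) \<le> (\<Prod>j=1..card A. lam j)"
proof (induction "card A" arbitrary: A)
  case 0
  then show ?case by simp
next
  case (Suc n)
  then have Ane: "A \<noteq> {}" by auto
  define m where "m = Max (g ` A)"
  have "m \<in> g ` A" unfolding m_def using Suc.prems Ane by (intro Max_in) auto
  then obtain x where xA: "x \<in> A" and gx: "g x = m" by auto
  have "g ` A \<subseteq> {1..m}" using Suc.prems unfolding m_def by auto
  then have "card (g ` A) \<le> m" using card_mono[of "{1..m}" "g ` A"] by simp
  then have cardm: "card A \<le> m" using card_image[OF Suc.prems(2)] by simp
  have cA: "card (A - {x}) = n" using Suc.hyps(2) xA Suc.prems by simp
  have IH: "(\<Prod>y\<in>A - {x}. lam (g y)) \<le> (\<Prod>j=1..n. lam j)"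
    using Suc.hyps(1)[of "A - {x}"] cA Suc.prems by (auto intro: inj_on_subset)
  have "(\<Prod>y\<in>A. lam (g y)) = lam (g x) * (\<Prod>y\<in>A - {x}. lam (g y))"
    using Suc.prems xA by (simp add: prod.remove)
  also have "\<dots> \<le> lam (Suc n) * (\<Prod>j=1..n. lam j)"
  proof (rule mult_mono)
    show "lam (g x) \<le> lam (Suc n)" using mono[of "Suc n" "g x"] cardm gx Suc.hyps(2) by simp
    show "0 \<le> lam (Suc n)" using nn by simp
    show "0 \<le> (\<Prod>y\<in>A - {x}. lam (g y))" using nn Suc.prems by (intro prod_nonneg) auto
  qed (fact IH)
  also have "\<dots> = (\<Prod>j=1..card A. lam j)"
    using Suc.hyps(2)[symmetric] by (simp add: prod.cl_ivl_Suc)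
  finally show ?case .
qed

definition Kc :: "real \<Rightarrow> real \<Rightarrow> real" where
  "Kc p \<tau> = 2 powr (p/2) / (1 - 2 powr (p/2 - \<tau>))"

lemma rank_facts:
  fixes Id :: "nat set"
  assumes fin: "finite Id"
  defines "r \<equiv> \<lambda>l. card {i\<in>Id. i \<le> l}"
  shows "\<And>i j. i \<in> Id \<Longrightarrow> j \<in> Id \<Longrightarrow> i < j \<Longrightarrow> r i < r j"
    and "bij_betw r Id {1..card Id}"
proof -
  show strict: "r i < r j" if "i \<in> Id" "j \<in> Id" "i < j" for i j
  proof -
    have "j \<in> {i'\<in>Id. i' \<le> j}" "j \<notin> {i'\<in>Id. i' \<le> i}" using that by auto
    moreover have "{i'\<in>Id. i' \<le> i} \<subseteq> {i'\<in>Id. i' \<le> j}" using that by auto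
    ultimately have "{i'\<in>Id. i' \<le> i} \<subset> {i'\<in>Id. i' \<le> j}" by blast
    then show ?thesis unfolding r_def by (rule psubset_card_mono[rotated]) (use fin in auto)
  qed
  have inj: "inj_on r Id"
  proof (rule inj_onI)
    fix i j assume "i \<in> Id" "j \<in> Id" "r i = r j"
    then show "i = j" using strict by (metis less_irrefl nat_neq_iff)
  qed
  have sub: "r ` Id \<subseteq> {1..card Id}"
  proof
    fix y assume "y \<in> r ` Id"
    then obtain i where i: "i \<in> Id" "y = r i" by auto
    have "{i'\<in>Id. i' \<le> i} \<noteq> {}" using i by auto
    then have "1 \<le> r i" unfolding r_def using fin by (simp add: Suc_le_eq card_gt_0_iff)
    moreover have "r i \<le> card Id" unfolding r_def using fin by (intro card_mono) auto
    ultimately show "y \<in> {1..card Id}" using i by simp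
  qed
  have "r ` Id = {1..card Id}"
    by (rule card_subset_eq) (use sub card_image[OF inj] in auto)
  then show "bij_betw r Id {1..card Id}" using inj by (simp add: bij_betw_def)
qed

lemma key_ineq:
  fixes lam :: "nat \<Rightarrow> real" and I :: "nat \<Rightarrow> nat set" and C p q \<tau> :: real and d M :: nat
  assumes lam_nonneg: "\<And>m. m \<ge> 1 \<Longrightarrow> lam m \<ge> 0"
    and lam_mono: "\<And>m n. 1 \<le> m \<Longrightarrow> m \<le> n \<Longrightarrow> lam n \<le> lam m"
    and Isub: "I d \<subseteq> {1..d}"
    and d1: "d \<ge> 1" and C_pos: "C > 0" and p_pos: "p > 0" and tau: "\<tau> > p/2"
    and tract: "poly_tract_const lam I C p q"
  shows "(\<Prod>j=1..a_of I d. lam j) powr \<tau> * (\<Sum>m=1..M. lam m powr \<tau>) ^ (d - a_of I d)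
     \<le> C * real d powr q * ((lam 1 ^ (d - a_of I d) * (\<Prod>j=1..a_of I d. lam j)) powr \<tau> + Kc p \<tau>)"
proof -
  define Id where "Id = I d"
  define a where "a = a_of I d"
  define J where "J = {1..d} - Id"
  define r where "r = (\<lambda>l. card {i\<in>Id. i \<le> l})"
  define P where "P = (\<Prod>j=1..a. lam j)"
  define kh where "kh = (\<lambda>(h::nat\<Rightarrow>nat) l. if l \<in> Id then r l else if l \<in> {1..d} then h l else 0)"
  define X where "X = PiE J (\<lambda>_. {1..M})"
  define g where "g = (\<lambda>h. lam_dk lam d (kh h))"
  have finId: "finite Id" using Isub finite_subset unfolding Id_def by blast
  have aId: "a = card Id" by (simp add: a_def Id_def a_of_def)
  have strict: "\<And>i j. i \<in> Id \<Longrightarrow> j \<in> Id \<Longrightarrow> i < j \<Longrightarrow> r i < r j"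
    and bij: "bij_betw r Id {1..a}"
    using rank_facts[OF finId] unfolding r_def aId by auto
  have r1: "r l \<ge> 1" if "l \<in> Id" for l using bij that by (auto simp: bij_betw_def)
  have cardJ: "card J = d - a" unfolding J_def aId
    using card_Diff_subset[OF finId, of "{1..d}"] Isub Id_def by simp
  have finJ: "finite J" by (simp add: J_def)
  have finX: "finite X" unfolding X_def using finJ by (intro finite_PiE) auto
  have Pr: "(\<Prod>l\<in>Id. lam (r l)) = P"
    unfolding P_def using prod.reindex_bij_betw[OF bij, of lam] by simp
  have P0: "P \<ge> 0" unfolding P_def using lam_nonneg by (intro prod_nonneg) auto
  have khN: "kh h \<in> nabla_A I d" if "h \<in> X" for h
    using that r1 strict Isub unfolding nabla_A_def kh_def X_def J_def Id_def by (auto simp: PiE_iff)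
  have gform: "g h = P * (\<Prod>l\<in>J. lam (h l))" if "h \<in> X" for h
  proof -
    have "g h = (\<Prod>l\<in>{1..d} - Id. lam (kh h l)) * (\<Prod>l\<in>Id. lam (kh h l))"
      unfolding g_def lam_dk_def by (rule prod.subset_diff) (use Isub Id_def in auto)
    also have "(\<Prod>l\<in>Id. lam (kh h l)) = P" unfolding Pr[symmetric] kh_def by simp
    also have "(\<Prod>l\<in>{1..d} - Id. lam (kh h l)) = (\<Prod>l\<in>J. lam (h l))"
      unfolding J_def kh_def by (intro prod.cong) auto
    finally show ?thesis by simp
  qed
  have injkh: "inj_on kh X"
  proof (rule inj_onI)
    fix h1 h2 assume h: "h1 \<in> X" "h2 \<in> X" "kh h1 = kh h2"
    show "h1 = h2"
    proof (rule PiE_ext[OF h(1)[unfolded X_def] h(2)[unfolded X_def]])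
      fix l assume "l \<in> J"
      then show "h1 l = h2 l" using fun_cong[OF h(3), of l] unfolding kh_def J_def by auto
    qed
  qed
  have gnn: "0 \<le> g h" if "h \<in> X" for h
    unfolding gform[OF that] using P0 lam_nonneg that unfolding X_def
    by (intro mult_nonneg_nonneg prod_nonneg) (auto simp: PiE_iff)
  have gG: "g h \<le> lam 1 ^ (d - a) * P" if "h \<in> X" for h
  proof -
    have "(\<Prod>l\<in>J. lam (h l)) \<le> (\<Prod>l\<in>J. lam 1)"
      using that lam_nonneg lam_mono unfolding X_def by (intro prod_mono) (auto simp: PiE_iff)
    then show ?thesis unfolding gform[OF that] using P0 cardJ by (simp add: mult_left_mono mult.commute)
  qed
  have cnt: "real (card {h\<in>X. g h > t}) \<le> (C * real d powr q) * t powr (-p/2)" if t: "0 < t" "t \<le> 1" for t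
  proof -
    have fin_info: "finite (info_set lam I (sqrt t) d)" and
      bnd: "real (card (info_set lam I (sqrt t) d)) \<le> C * sqrt t powr (-p) * real d powr q"
      using tract d1 t unfolding poly_tract_const_def by auto
    have "card {h\<in>X. g h > t} \<le> card (info_set lam I (sqrt t) d)"
    proof (rule card_inj_on_le[OF _ _ fin_info])
      show "inj_on kh {h\<in>X. g h > t}" by (rule inj_on_subset[OF injkh]) auto
      show "kh ` {h\<in>X. g h > t} \<subseteq> info_set lam I (sqrt t) d"
        using khN t unfolding info_set_def g_def by auto
    qed
    then have "real (card {h\<in>X. g h > t}) \<le> C * sqrt t powr (-p) * real d powr q" using bnd by linarith
    also have "sqrt t powr (-p) = t powr (-p/2)"
      using t by (simp add: powr_half_sqrt[symmetric] powr_powr)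
    finally show ?thesis by (simp add: algebra_simps)
  qed
  have main: "(\<Sum>h\<in>X. g h powr \<tau>) \<le> (C * real d powr q) * ((lam 1 ^ (d - a) * P) powr \<tau> + Kc p \<tau>)"
    unfolding Kc_def
    by (rule sum_bound[OF finX gnn gG _ cnt p_pos tau]) (use C_pos in auto)
  have "(\<Sum>h\<in>X. g h powr \<tau>) = (\<Sum>h\<in>X. P powr \<tau> * (\<Prod>l\<in>J. lam (h l) powr \<tau>))"
    by (intro sum.cong refl) (simp add: gform powr_mult prod_powr_distrib)
  also have "\<dots> = P powr \<tau> * (\<Prod>l\<in>J. \<Sum>m\<in>{1..M}. lam m powr \<tau>)"
    unfolding X_def sum_distrib_left[symmetric] by (subst prod_sum_PiE) (use finJ in auto)
  also have "\<dots> = P powr \<tau> * (\<Sum>m=1..M. lam m powr \<tau>) ^ (d - a)" using cardJ by simp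
  finally show ?thesis using main unfolding P_def a_def by simp
qed

lemma init_le:
  fixes lam :: "nat \<Rightarrow> real" and I :: "nat \<Rightarrow> nat set" and d :: nat
  assumes lam_nonneg: "\<And>m. m \<ge> 1 \<Longrightarrow> lam m \<ge> 0"
    and lam_mono: "\<And>m n. 1 \<le> m \<Longrightarrow> m \<le> n \<Longrightarrow> lam n \<le> lam m"
    and Isub: "I d \<subseteq> {1..d}"
  shows "lam_init lam I d \<le> lam 1 ^ (d - a_of I d) * (\<Prod>j=1..a_of I d. lam j)"
proof -
  define Id where "Id = I d"
  define a where "a = a_of I d"
  define J where "J = {1..d} - Id"
  define r where "r = (\<lambda>l. card {i\<in>Id. i \<le> l})"
  define P where "P = (\<Prod>j=1..a. lam j)"
  have finId: "finite Id" using Isub finite_subset unfolding Id_def by blast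
  have aId: "a = card Id" by (simp add: a_def Id_def a_of_def)
  have strict: "\<And>i j. i \<in> Id \<Longrightarrow> j \<in> Id \<Longrightarrow> i < j \<Longrightarrow> r i < r j"
    and bij: "bij_betw r Id {1..a}"
    using rank_facts[OF finId] unfolding r_def aId by auto
  have r1: "r l \<ge> 1" if "l \<in> Id" for l using bij that by (auto simp: bij_betw_def)
  have cardJ: "card J = d - a" unfolding J_def aId
    using card_Diff_subset[OF finId, of "{1..d}"] Isub Id_def by simp
  define k0 where "k0 = (\<lambda>l. if l \<in> Id then r l else if l \<in> {1..d} then 1 else (0::nat))"
  have "k0 \<in> nabla_A I d"
    using r1 strict Isub unfolding nabla_A_def k0_def Id_def by auto
  then have ne: "lam_dk lam d ` nabla_A I d \<noteq> {}" by auto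
  have bound: "lam_dk lam d k \<le> lam 1 ^ (d - a) * P" if k: "k \<in> nabla_A I d" for k
  proof -
    have k1: "\<forall>l\<in>{1..d}. 1 \<le> k l" and kinc: "\<forall>i\<in>Id. \<forall>j\<in>Id. i < j \<longrightarrow> k i < k j"
      using k unfolding nabla_A_def Id_def by auto
    have "lam_dk lam d k = (\<Prod>l\<in>{1..d} - Id. lam (k l)) * (\<Prod>l\<in>Id. lam (k l))"
      unfolding lam_dk_def by (rule prod.subset_diff) (use Isub Id_def in auto)
    also have "\<dots> \<le> lam 1 ^ (d - a) * P"
    proof (rule mult_mono)
      have "(\<Prod>l\<in>J. lam (k l)) \<le> (\<Prod>l\<in>J. lam 1)"
        using k1 lam_nonneg lam_mono unfolding J_def by (intro prod_mono) auto
      then show "(\<Prod>l\<in>{1..d} - Id. lam (k l)) \<le> lam 1 ^ (d - a)" using cardJ by (simp add: J_def)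
      have inj: "inj_on k Id"
      proof (rule inj_onI)
        fix i j assume "i \<in> Id" "j \<in> Id" "k i = k j"
        then show "i = j" using kinc by (metis less_irrefl nat_neq_iff)
      qed
      show "(\<Prod>l\<in>Id. lam (k l)) \<le> P"
        unfolding P_def aId
        by (rule prod_inj_le[OF lam_nonneg lam_mono finId inj]) (use k1 Isub Id_def in auto)
      show "0 \<le> lam 1 ^ (d - a)" using lam_nonneg by simp
      show "0 \<le> (\<Prod>l\<in>Id. lam (k l))" using lam_nonneg k1 Isub Id_def by (intro prod_nonneg) auto
    qed
    finally show ?thesis .
  qed
  show ?thesis unfolding lam_init_def using bound ne unfolding P_def a_def
    by (intro cSup_least) auto
qed

lemma pow_powr: "0 \<le> (x::real) \<Longrightarrow> (x ^ n) powr t = (x powr t) ^ n"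
proof (cases "x = 0")
  case True
  then show ?thesis by (cases n) auto
next
  case False
  assume "0 \<le> x"
  then have x: "0 < x" using False by simp
  have "(x ^ n) powr t = (x powr real n) powr t" by (simp add: powr_realpow x)
  also have "\<dots> = x powr (real n * t)" by (simp add: powr_powr)
  also have "\<dots> = (x powr t) ^ n" using powr_power[of x t n] x by simp
  finally show ?thesis .
qed

lemma poly_exp_decay:
  fixes \<theta> :: real
  assumes "0 < \<theta>" "\<theta> < 1"
  shows "(\<lambda>n. real n ^ N * \<theta> ^ n) \<longlonglongrightarrow> 0"
proof (cases "N = 0")
  case True
  then show ?thesis using assms by (simp add: LIMSEQ_power_zero)
next
  case False
  define \<rho> where "\<rho> = root N \<theta>"
  have r0: "0 < \<rho>" and r1: "\<rho> < 1" using assms False by (auto simp: \<rho>_def)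
  have rN: "\<rho> ^ N = \<theta>" using assms False by (simp add: \<rho>_def)
  have eq: "real n ^ N * \<theta> ^ n = (real n * \<rho> ^ n) ^ N" for n
    by (simp add: power_mult_distrib rN[symmetric] power_mult[symmetric] mult.commute)
  have "(\<lambda>n. real n * \<rho> ^ n) \<longlonglongrightarrow> 0"
    using powser_times_n_limit_0[of \<rho>] r0 r1 by simp
  then have "(\<lambda>n. (real n * \<rho> ^ n) ^ N) \<longlonglongrightarrow> 0 ^ N" by (rule tendsto_power)
  moreover have "(0::real) ^ N = 0" using False by simp
  ultimately show ?thesis unfolding eq by simp
qed

lemma poly_bound_pow:
  fixes P :: "real poly"
  shows "\<exists>c N. \<forall>x\<ge>1. \<bar>poly P x\<bar> \<le> c * x ^ N"
proof (intro exI allI impI)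
  fix x :: real assume x: "x \<ge> 1"
  have "\<bar>poly P x\<bar> = \<bar>\<Sum>i\<le>degree P. coeff P i * x ^ i\<bar>" by (simp add: poly_altdef)
  also have "\<dots> \<le> (\<Sum>i\<le>degree P. \<bar>coeff P i * x ^ i\<bar>)" by (rule sum_abs)
  also have "\<dots> \<le> (\<Sum>i\<le>degree P. \<bar>coeff P i\<bar> * x ^ degree P)"
  proof (rule sum_mono)
    fix i assume "i \<in> {..degree P}"
    then have "x ^ i \<le> x ^ degree P" using x by (intro power_increasing) auto
    then show "\<bar>coeff P i * x ^ i\<bar> \<le> \<bar>coeff P i\<bar> * x ^ degree P"
      using x by (simp add: abs_mult mult_left_mono)
  qed
  also have "\<dots> = (\<Sum>i\<le>degree P. \<bar>coeff P i\<bar>) * x ^ degree P" by (simp add: sum_distrib_right)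
  finally show "\<bar>poly P x\<bar> \<le> (\<Sum>i\<le>degree P. \<bar>coeff P i\<bar>) * x ^ degree P" .
qed

theorem proposition7:
  fixes lam :: "nat \<Rightarrow> real" and I :: "nat \<Rightarrow> nat set" and C p q :: real
  assumes lam_nonneg: "\<And>m. m \<ge> 1 \<Longrightarrow> lam m \<ge> 0"
    and lam_mono: "\<And>m n. 1 \<le> m \<Longrightarrow> m \<le> n \<Longrightarrow> lam n \<le> lam m"
    and lam_compact: "(\<lambda>m. lam m) \<longlonglongrightarrow> 0"
    and lam2_pos: "lam 2 > 0"
    and I_sub: "\<And>d. d \<ge> 1 \<Longrightarrow> I d \<subseteq> {1..d} \<and> I d \<noteq> {}"
    and I_1: "I 1 = {1}"
    and init_pos: "\<And>d. d \<ge> 1 \<Longrightarrow> lam_init lam I d > 0"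
    and C_pos: "C > 0" and p_pos: "p > 0" and q_nonneg: "q \<ge> 0"
    and tract: "poly_tract_const lam I C p q"
  shows "(\<forall>P :: real poly. (\<forall>d::nat. d \<ge> 1 \<longrightarrow> poly P (real d) > 0) \<longrightarrow>
            (\<lambda>d. lam_init lam I d * poly P (real d)) \<longlonglongrightarrow> 0)
     \<and> (\<forall>\<tau>::real. \<tau> > p / 2 \<longrightarrow>
            summable (\<lambda>m. lam (Suc m) powr \<tau>) \<and>
            (\<forall>\<delta>>0. \<exists>d0::nat. d0 \<ge> 1 \<and> (\<forall>d\<ge>d0.
               ln (\<Sum>m. lam (Suc m) powr \<tau>) - \<delta> \<le>
               (1 / real d) * (\<Sum>k=1..a_of I d. ln ((\<Sum>m. lam (Suc m) powr \<tau>) / lam k powr \<tau>)))))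
     \<and> (lam 1 < 1 \<or> filterlim (a_of I) at_top sequentially)"
proof -
  have lam1: "lam 1 > 0" using lam2_pos lam_mono[of 1 2] by simp
  define G where "G d = lam 1 ^ (d - a_of I d) * (\<Prod>j=1..a_of I d. lam j)" for d
  have Isub: "I d \<subseteq> {1..d}" if "d \<ge> 1" for d using I_sub that by auto
  have ale: "a_of I d \<le> d" if "d \<ge> 1" for d
    using card_mono[OF _ Isub[OF that]] by (simp add: a_of_def)
  have LG: "lam_init lam I d \<le> G d" if "d \<ge> 1" for d
    unfolding G_def by (rule init_le[where lam=lam and I=I and d=d, OF lam_nonneg lam_mono Isub[OF that]])
  have Gpos: "G d > 0" if "d \<ge> 1" for d using LG[OF that] init_pos[OF that] by linarith
  have Kpos: "Kc p \<tau> > 0" if "\<tau> > p/2" for \<tau>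
  proof -
    have "2 powr (p/2 - \<tau>) < 2 powr 0" by (rule powr_less_mono) (use that in auto)
    then show ?thesis by (simp add: Kc_def)
  qed
  have KEY: "(\<Prod>j=1..a_of I d. lam j) powr \<tau> * (\<Sum>m=1..M. lam m powr \<tau>) ^ (d - a_of I d)
     \<le> C * real d powr q * (G d powr \<tau> + Kc p \<tau>)" if "\<tau> > p/2" "d \<ge> 1" for \<tau> d M
    unfolding G_def by (rule key_ineq[where lam=lam and I=I and d=d and M=M, OF lam_nonneg lam_mono Isub[OF that(2)] that(2) C_pos p_pos that(1) tract])
  have pos_lam: "lam j > 0" if "d \<ge> 1" "1 \<le> j" "j \<le> a_of I d" for d j
  proof -
    have "(\<Prod>j=1..a_of I d. lam j) \<noteq> 0" using Gpos[OF that(1)] unfolding G_def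
      by (metis mult_zero_right less_irrefl)
    then have "lam j \<noteq> 0" using that prod_zero_iff[of "{1..a_of I d}" lam] by auto
    then show ?thesis using lam_nonneg[OF that(2)] by simp
  qed
  have decay: "\<exists>A1 Q \<theta>1 E. 0 < \<theta>1 \<and> \<theta>1 < 1 \<and> 0 \<le> A1 \<and> 0 \<le> E \<and>
      eventually (\<lambda>d. G d \<le> A1 * (real d ^ Q * \<theta>1 ^ d) + E * (1/2) ^ d) sequentially"
  proof -
    define \<Lambda> where "\<Lambda> = max (lam 1) 1"
    define s where "s = 1 / (2 * \<Lambda>)"
    define \<eta> where "\<eta> = s ^ 2"
    have \<Lambda>1: "\<Lambda> \<ge> 1" by (simp add: \<Lambda>_def)
    have s0: "s > 0" and s1: "s \<le> 1" using \<Lambda>1 by (auto simp: s_def field_simps)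
    have \<eta>0: "\<eta> > 0" using s0 by (simp add: \<eta>_def)
    have \<eta>1: "\<eta> \<le> 1" using s0 s1 by (simp add: \<eta>_def power_le_one)
    have "eventually (\<lambda>j. lam j < \<eta>) sequentially"
      using lam_compact \<eta>0 by (rule order_tendstoD(2))
    then obtain m0 where m0: "\<And>j. j \<ge> m0 \<Longrightarrow> lam j < \<eta>"
      unfolding eventually_sequentially by blast
    define W where "W = \<Lambda> / \<eta>"
    have W1: "W \<ge> 1" using \<Lambda>1 \<eta>0 \<eta>1 by (simp add: W_def field_simps)
    have Weta: "W * \<eta> = \<Lambda>" using \<eta>0 by (simp add: W_def)
    have prodb: "(\<Prod>j=1..n. lam j) \<le> W ^ (min n m0) * \<eta> ^ n" for n
    proof (induction n)
      case 0
      then show ?case by simp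
    next
      case (Suc n)
      have pn: "(\<Prod>j=1..n. lam j) \<ge> 0" using lam_nonneg by (intro prod_nonneg) auto
      have l0: "lam (Suc n) \<ge> 0" using lam_nonneg by simp
      have "(\<Prod>j=1..Suc n. lam j) = (\<Prod>j=1..n. lam j) * lam (Suc n)" by (simp add: prod.cl_ivl_Suc)
      also have "\<dots> \<le> W ^ (min (Suc n) m0) * \<eta> ^ Suc n"
      proof (cases "Suc n \<le> m0")
        case True
        have "lam (Suc n) \<le> W * \<eta>" using lam_mono[of 1 "Suc n"] Weta by (simp add: \<Lambda>_def)
        then have "(\<Prod>j=1..n. lam j) * lam (Suc n) \<le> (W ^ (min n m0) * \<eta> ^ n) * (W * \<eta>)"
          using Suc.IH pn l0 by (intro mult_mono) auto
        also have "\<dots> = W ^ (min (Suc n) m0) * \<eta> ^ Suc n" using True by (simp add: min_def)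
        finally show ?thesis .
      next
        case False
        have "lam (Suc n) \<le> \<eta>" using m0[of "Suc n"] False by simp
        then have "(\<Prod>j=1..n. lam j) * lam (Suc n) \<le> (W ^ (min n m0) * \<eta> ^ n) * \<eta>"
          using Suc.IH pn l0 by (intro mult_mono) auto
        also have "\<dots> = W ^ (min (Suc n) m0) * \<eta> ^ Suc n"
        proof -
          have "min n m0 = min (Suc n) m0" using False by (simp add: min_def)
          then show ?thesis by simp
        qed
        finally show ?thesis .
      qed
      finally show ?case .
    qed
    define E where "E = W ^ m0"
    have E0: "E \<ge> 0" using W1 by (simp add: E_def)
    have case2: "G d \<le> E * (1/2) ^ d" if d1: "d \<ge> 1" and da: "d \<le> 2 * a_of I d" for d
    proof -
      define a where "a = a_of I d"
      have ad: "a \<le> d" using ale[OF d1] by (simp add: a_def)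
      have P0: "(\<Prod>j=1..a. lam j) \<ge> 0" using lam_nonneg by (intro prod_nonneg) auto
      have A: "lam 1 ^ (d - a) \<le> \<Lambda> ^ d"
      proof -
        have "lam 1 ^ (d - a) \<le> \<Lambda> ^ (d - a)" using lam1 by (intro power_mono) (auto simp: \<Lambda>_def)
        also have "\<dots> \<le> \<Lambda> ^ d" using \<Lambda>1 by (intro power_increasing) auto
        finally show ?thesis .
      qed
      have B: "(\<Prod>j=1..a. lam j) \<le> E * s ^ d"
      proof -
        have "(\<Prod>j=1..a. lam j) \<le> W ^ (min a m0) * \<eta> ^ a" by (rule prodb)
        also have "\<dots> \<le> E * s ^ d"
        proof (rule mult_mono)
          show "W ^ (min a m0) \<le> E" unfolding E_def using W1 by (intro power_increasing) auto
          have "\<eta> ^ a = s ^ (2 * a)" by (simp add: \<eta>_def power_mult)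
          also have "\<dots> \<le> s ^ d" using s0 s1 da by (intro power_decreasing) (auto simp: a_def)
          finally show "\<eta> ^ a \<le> s ^ d" .
        qed (use E0 \<eta>0 in auto)
        finally show ?thesis .
      qed
      have "G d = lam 1 ^ (d - a) * (\<Prod>j=1..a. lam j)" by (simp add: G_def a_def)
      also have "\<dots> \<le> \<Lambda> ^ d * (E * s ^ d)"
        using A B P0 \<Lambda>1 by (intro mult_mono) auto
      also have "\<dots> = E * (\<Lambda> * s) ^ d" by (simp add: power_mult_distrib)
      also have "\<Lambda> * s = 1/2" using \<Lambda>1 by (simp add: s_def)
      finally show ?thesis by simp
    qed
    define u where "u = lam 1 powr p"
    define v where "v = lam 2 powr p"
    define S2 where "S2 = u + v"
    define \<rho> where "\<rho> = u / S2"
    define \<theta>0 where "\<theta>0 = sqrt \<rho>"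
    have u0: "u > 0" using lam1 by (simp add: u_def)
    have v0: "v > 0" using lam2_pos by (simp add: v_def)
    have \<rho>0: "\<rho> > 0" and \<rho>1: "\<rho> < 1" using u0 v0 by (auto simp: \<rho>_def S2_def)
    have th00: "\<theta>0 > 0" and th01: "\<theta>0 < 1" using \<rho>0 \<rho>1 by (auto simp: \<theta>0_def)
    have th0sq: "\<theta>0 ^ 2 = \<rho>" using \<rho>0 by (simp add: \<theta>0_def)
    have uS: "u = \<rho> * S2" using u0 v0 by (simp add: \<rho>_def S2_def)
    define Q0 where "Q0 = nat \<lceil>q\<rceil>"
    have dq: "real d powr q \<le> real d ^ Q0" if "d \<ge> 1" for d :: nat
    proof -
      have "real d powr q \<le> real d powr real Q0"
        using that by (intro powr_mono) (auto simp: Q0_def real_nat_ceiling_ge)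
      also have "\<dots> = real d ^ Q0" using that by (simp add: powr_realpow)
      finally show ?thesis .
    qed
    define K where "K = Kc p p"
    have K0: "K > 0" unfolding K_def by (rule Kpos) (use p_pos in simp)
    have pp: "p > p / 2" using p_pos by simp
    define R where "R = nat \<lceil>1 / p\<rceil>"
    define A1 where "A1 = (2 * K * C) powr (1 / p)"
    define \<theta>1 where "\<theta>1 = \<theta>0 powr (1 / p)"
    have th10: "\<theta>1 > 0" using th00 by (simp add: \<theta>1_def)
    have th11: "\<theta>1 < 1"
    proof -
      have "\<theta>0 powr (1/p) < 1 powr (1/p)" using th00 th01 p_pos by (intro powr_less_mono2) auto
      then show ?thesis by (simp add: \<theta>1_def)
    qed
    have "(\<lambda>d. C * (real d ^ Q0 * \<theta>0 ^ d)) \<longlonglongrightarrow> C * 0"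
      by (intro tendsto_intros poly_exp_decay th00 th01)
    then have "eventually (\<lambda>d. C * (real d ^ Q0 * \<theta>0 ^ d) < 1/2) sequentially"
      by (intro order_tendstoD(2)) auto
    then have evs: "eventually (\<lambda>d. d \<ge> 1 \<and> C * (real d ^ Q0 * \<theta>0 ^ d) < 1/2) sequentially"
      using eventually_ge_at_top[of "1::nat"] by eventually_elim auto
    have case1: "G d \<le> A1 * (real d ^ (R * Q0) * \<theta>1 ^ d)"
      if d1: "d \<ge> 1" and small: "C * (real d ^ Q0 * \<theta>0 ^ d) < 1/2" and db: "d \<le> 2 * (d - a_of I d)" for d
    proof -
      define a where "a = a_of I d"
      define b where "b = d - a"
      define P where "P = (\<Prod>j=1..a. lam j)"
      define Gp where "Gp = G d powr p"
      define Bd where "Bd = C * real d powr q"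
      have P0: "P \<ge> 0" unfolding P_def using lam_nonneg by (intro prod_nonneg) auto
      have Gp0: "Gp \<ge> 0" by (simp add: Gp_def)
      have Bd0: "Bd \<ge> 0" using C_pos by (simp add: Bd_def)
      have S2eq: "(\<Sum>m=1..2. lam m powr p) = S2" by (simp add: S2_def u_def v_def numeral_2_eq_2)
      have key: "P powr p * S2 ^ b \<le> Bd * (Gp + K)"
        using KEY[OF pp d1, of 2] unfolding S2eq by (simp add: P_def b_def a_def Bd_def Gp_def K_def)
      have Gpeq: "Gp = \<rho> ^ b * (P powr p * S2 ^ b)"
      proof -
        have "Gp = (lam 1 ^ b) powr p * P powr p" by (simp add: Gp_def G_def powr_mult P_def a_def b_def)
        also have "(lam 1 ^ b) powr p = u ^ b" using lam1 by (simp add: pow_powr u_def)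
        also have "u ^ b = \<rho> ^ b * S2 ^ b" by (simp add: uS power_mult_distrib)
        finally show ?thesis by (simp add: algebra_simps)
      qed
      have rb: "\<rho> ^ b \<le> \<theta>0 ^ d"
      proof -
        have "\<rho> ^ b = \<theta>0 ^ (2 * b)" by (simp add: th0sq[symmetric] power_mult)
        also have "\<dots> \<le> \<theta>0 ^ d" using th00 th01 db by (intro power_decreasing) (auto simp: b_def a_def)
        finally show ?thesis .
      qed
      have Bdb: "Bd \<le> C * real d ^ Q0" using dq[OF d1] C_pos by (simp add: Bd_def)
      define X where "X = \<rho> ^ b * Bd"
      have X0: "X \<ge> 0" using \<rho>0 Bd0 by (simp add: X_def)
      have Xb: "X \<le> C * (real d ^ Q0 * \<theta>0 ^ d)"
      proof -
        have "X \<le> \<theta>0 ^ d * (C * real d ^ Q0)" unfolding X_def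
          using rb Bdb \<rho>0 Bd0 th00 by (intro mult_mono) auto
        then show ?thesis by (simp add: algebra_simps)
      qed
      have "Gp \<le> \<rho> ^ b * (Bd * (Gp + K))" unfolding Gpeq
        using key \<rho>0 by (intro mult_left_mono) (auto simp: Gpeq)
      also have "\<dots> = X * Gp + X * K" by (simp add: X_def algebra_simps)
      finally have "Gp \<le> X * Gp + X * K" .
      moreover have "X * Gp \<le> (1/2) * Gp" using Xb small Gp0 by (intro mult_right_mono) auto
      moreover have "X * K \<le> C * (real d ^ Q0 * \<theta>0 ^ d) * K" using Xb K0 by (intro mult_right_mono) auto
      ultimately have Gpb: "Gp \<le> 2 * K * C * (real d ^ Q0 * \<theta>0 ^ d)" by (simp add: algebra_simps)
      have "G d = Gp powr (1 / p)"
        using Gpos[OF d1] p_pos by (simp add: Gp_def powr_powr)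
      also have "\<dots> \<le> (2 * K * C * (real d ^ Q0 * \<theta>0 ^ d)) powr (1 / p)"
        using Gpb Gp0 p_pos by (intro powr_mono2) auto
      also have "\<dots> = A1 * ((real d powr (1 / p)) ^ Q0 * \<theta>1 ^ d)"
        using th00 by (simp add: A1_def \<theta>1_def powr_mult pow_powr)
      also have "\<dots> \<le> A1 * (real d ^ (R * Q0) * \<theta>1 ^ d)"
      proof -
        have "real d powr (1 / p) \<le> real d powr real R"
          using d1 by (intro powr_mono) (auto simp: R_def real_nat_ceiling_ge)
        also have "\<dots> = real d ^ R" using d1 by (simp add: powr_realpow)
        finally have "(real d powr (1 / p)) ^ Q0 \<le> (real d ^ R) ^ Q0" by (intro power_mono) auto
        then have "(real d powr (1 / p)) ^ Q0 \<le> real d ^ (R * Q0)" by (simp add: power_mult)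
        then show ?thesis using th10 by (intro mult_left_mono mult_right_mono) (auto simp: A1_def)
      qed
      finally show ?thesis .
    qed
    show ?thesis
    proof (intro exI conjI)
      show "0 < \<theta>1" "\<theta>1 < 1" by (fact th10, fact th11)
      show "0 \<le> A1" by (simp add: A1_def)
      show "0 \<le> E" by (fact E0)
      show "eventually (\<lambda>d. G d \<le> A1 * (real d ^ (R * Q0) * \<theta>1 ^ d) + E * (1/2) ^ d) sequentially"
        using evs
      proof eventually_elim
        case (elim d)
        then have d1: "d \<ge> 1" and small: "C * (real d ^ Q0 * \<theta>0 ^ d) < 1/2" by auto
        have t1: "A1 * (real d ^ (R * Q0) * \<theta>1 ^ d) \<ge> 0" using th10 by (simp add: A1_def)
        have t2: "E * (1/2) ^ d \<ge> 0" using E0 by simp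
        show ?case
        proof (cases "d \<le> 2 * (d - a_of I d)")
          case True
          then show ?thesis using case1[OF d1 small True] t2 by linarith
        next
          case False
          then have "d \<le> 2 * a_of I d" using ale[OF d1] by linarith
          then show ?thesis using case2[OF d1] t1 by linarith
        qed
      qed
    qed
  qed
  then obtain A1 Q \<theta>1 E where th1: "0 < \<theta>1" "\<theta>1 < 1" and A1: "0 \<le> A1" and E: "0 \<le> E"
    and Gev: "eventually (\<lambda>d. G d \<le> A1 * (real d ^ Q * \<theta>1 ^ d) + E * (1/2) ^ d) sequentially"
    by blast
  have boundlim: "(\<lambda>d. c * (A1 * (real d ^ (Q + N) * \<theta>1 ^ d) + E * (real d ^ N * (1/2) ^ d))) \<longlonglongrightarrow> 0" for c N
  proof -
    have "(\<lambda>d. c * (A1 * (real d ^ (Q + N) * \<theta>1 ^ d) + E * (real d ^ N * (1/2) ^ d))) \<longlonglongrightarrow> c * (A1 * 0 + E * 0)"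
      by (intro tendsto_intros poly_exp_decay th1) auto
    then show ?thesis by simp
  qed
  have partI: "\<forall>P :: real poly. (\<forall>d::nat. d \<ge> 1 \<longrightarrow> poly P (real d) > 0) \<longrightarrow>
            (\<lambda>d. lam_init lam I d * poly P (real d)) \<longlonglongrightarrow> 0"
  proof (intro allI impI)
    fix P :: "real poly" assume Ppos: "\<forall>d::nat. d \<ge> 1 \<longrightarrow> poly P (real d) > 0"
    obtain c N where cN: "\<And>x. x \<ge> 1 \<Longrightarrow> \<bar>poly P x\<bar> \<le> c * x ^ N" using poly_bound_pow[of P] by blast
    show "(\<lambda>d. lam_init lam I d * poly P (real d)) \<longlonglongrightarrow> 0"
    proof (rule Lim_null_comparison[OF _ boundlim[of c N]])
      show "\<forall>\<^sub>F d in sequentially. norm (lam_init lam I d * poly P (real d))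
          \<le> c * (A1 * (real d ^ (Q + N) * \<theta>1 ^ d) + E * (real d ^ N * (1/2) ^ d))"
        using Gev eventually_ge_at_top[of "1::nat"]
      proof eventually_elim
        case (elim d)
        have d1: "d \<ge> 1" and Gd: "G d \<le> A1 * (real d ^ Q * \<theta>1 ^ d) + E * (1/2) ^ d" using elim by auto
        have pP: "poly P (real d) > 0" using Ppos d1 by auto
        have pc: "poly P (real d) \<le> c * real d ^ N" using cN[of "real d"] d1 by auto
        have L0: "lam_init lam I d > 0" using init_pos d1 by auto
        have "norm (lam_init lam I d * poly P (real d)) = lam_init lam I d * poly P (real d)"
          using pP L0 by simp
        also have "\<dots> \<le> G d * (c * real d ^ N)"
          by (rule mult_mono) (use LG[OF d1] pc pP Gpos[OF d1] in auto)
        also have "\<dots> \<le> (A1 * (real d ^ Q * \<theta>1 ^ d) + E * (1/2) ^ d) * (c * real d ^ N)"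
          by (rule mult_right_mono[OF Gd]) (use pc pP in linarith)
        also have "\<dots> = c * (A1 * (real d ^ (Q + N) * \<theta>1 ^ d) + E * (real d ^ N * (1/2) ^ d))"
          by (simp add: power_add algebra_simps)
        finally show ?case .
      qed
    qed
  qed
  have partII: "\<forall>\<tau>::real. \<tau> > p / 2 \<longrightarrow>
            summable (\<lambda>m. lam (Suc m) powr \<tau>) \<and>
            (\<forall>\<delta>>0. \<exists>d0::nat. d0 \<ge> 1 \<and> (\<forall>d\<ge>d0.
               ln (\<Sum>m. lam (Suc m) powr \<tau>) - \<delta> \<le>
               (1 / real d) * (\<Sum>k=1..a_of I d. ln ((\<Sum>m. lam (Suc m) powr \<tau>) / lam k powr \<tau>))))"
  proof (intro allI impI)
    fix \<tau> :: real assume tau: "\<tau> > p/2"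
    have tau0: "\<tau> > 0" using tau p_pos by linarith
    define K where "K = Kc p \<tau>"
    have K0: "K > 0" using Kpos[OF tau] by (simp add: K_def)
    have partial: "(\<Sum>m=1..M. lam m powr \<tau>) \<le> C * (lam 1 powr \<tau> + K)" for M
    proof -
      have "(\<Sum>m\<in>{1..M}. lam m powr \<tau>) \<le> C * (lam 1 powr \<tau> + 2 powr (p/2) / (1 - 2 powr (p/2 - \<tau>)))"
      proof (rule sum_bound[where g=lam and X="{1..M}" and G="lam 1" and B=C and p=p and \<tau>=\<tau>])
        show "finite {1..M}" by simp
        show "0 \<le> lam m" if "m \<in> {1..M}" for m using lam_nonneg that by auto
        show "lam m \<le> lam 1" if "m \<in> {1..M}" for m using lam_mono that by auto
        show "0 \<le> C" using C_pos by simp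
        show "0 < p" "p / 2 < \<tau>" using p_pos tau by auto
        fix t :: real assume t: "0 < t" "t \<le> 1"
        define e where "e = (\<lambda>m::nat. (\<lambda>l::nat. if l = 1 then m else 0))"
        have fin_info: "finite (info_set lam I (sqrt t) 1)" and
          bnd: "real (card (info_set lam I (sqrt t) 1)) \<le> C * sqrt t powr (-p) * real 1 powr q"
          using tract t unfolding poly_tract_const_def by auto
        have "card {m\<in>{1..M}. lam m > t} \<le> card (info_set lam I (sqrt t) 1)"
        proof (rule card_inj_on_le[OF _ _ fin_info])
          show "inj_on e {m\<in>{1..M}. lam m > t}"
          proof (rule inj_onI)
            fix x y assume "e x = e y"
            then have "e x 1 = e y 1" by simp
            then show "x = y" by (simp add: e_def)
          qed
          show "e ` {m\<in>{1..M}. lam m > t} \<subseteq> info_set lam I (sqrt t) 1"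
          proof
            fix k assume "k \<in> e ` {m\<in>{1..M}. lam m > t}"
            then obtain m where m: "m \<in> {1..M}" "lam m > t" and k: "k = e m" by auto
            have "k \<in> nabla_A I 1" using m unfolding k e_def nabla_A_def I_1 by auto
            moreover have "lam_dk lam 1 k = lam m" unfolding k e_def lam_dk_def by simp
            moreover have "(sqrt t)\<^sup>2 = t" using t by simp
            ultimately show "k \<in> info_set lam I (sqrt t) 1" using m unfolding info_set_def by simp
          qed
        qed
        then have "real (card {m\<in>{1..M}. lam m > t}) \<le> C * sqrt t powr (-p) * real 1 powr q"
          using bnd by linarith
        also have "sqrt t powr (-p) = t powr (-p/2)"
          using t by (simp add: powr_half_sqrt[symmetric] powr_powr)
        finally show "real (card {m\<in>{1..M}. lam m > t}) \<le> C * t powr (-p/2)" by simp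
      qed
      then show ?thesis by (simp add: K_def Kc_def)
    qed
    have psum: "(\<Sum>i<n. lam (Suc i) powr \<tau>) = (\<Sum>m=1..n. lam m powr \<tau>)" for n
      using sum.atLeast1_atMost_eq[of "\<lambda>m. lam m powr \<tau>" n] by simp
    have summ: "summable (\<lambda>m. lam (Suc m) powr \<tau>)"
      by (rule summableI_nonneg_bounded[where x="C * (lam 1 powr \<tau> + K)"]) (simp, unfold psum, rule partial)
    define S where "S = (\<Sum>m. lam (Suc m) powr \<tau>)"
    have Slim: "(\<lambda>M. \<Sum>m=1..M. lam m powr \<tau>) \<longlonglongrightarrow> S"
      using summable_LIMSEQ[OF summ] unfolding S_def psum .
    have "(\<Sum>m\<in>{0}. lam (Suc m) powr \<tau>) \<le> S"
      unfolding S_def by (rule sum_le_suminf[OF summ]) auto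
    moreover have "lam 1 powr \<tau> > 0" using lam1 by simp
    ultimately have "lam 1 powr \<tau> \<le> S" "lam 1 powr \<tau> > 0" by simp_all
    then have Spos: "S > 0" by linarith
    have KEYS: "(\<Prod>j=1..a_of I d. lam j) powr \<tau> * S ^ (d - a_of I d) \<le> C * real d powr q * (G d powr \<tau> + K)"
      if d1: "d \<ge> 1" for d
    proof (rule LIMSEQ_le_const2[OF tendsto_mult_left[OF tendsto_power[OF Slim]]])
      show "\<exists>N. \<forall>n\<ge>N. (\<Prod>j=1..a_of I d. lam j) powr \<tau> * (\<Sum>m=1..n. lam m powr \<tau>) ^ (d - a_of I d)
          \<le> C * real d powr q * (G d powr \<tau> + K)"
        using KEY[OF tau d1] by (auto simp: K_def)
    qed
    show "summable (\<lambda>m. lam (Suc m) powr \<tau>) \<and>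
            (\<forall>\<delta>>0. \<exists>d0::nat. d0 \<ge> 1 \<and> (\<forall>d\<ge>d0.
               ln (\<Sum>m. lam (Suc m) powr \<tau>) - \<delta> \<le>
               (1 / real d) * (\<Sum>k=1..a_of I d. ln ((\<Sum>m. lam (Suc m) powr \<tau>) / lam k powr \<tau>))))"
      unfolding S_def[symmetric]
    proof (intro conjI allI impI)
      show "summable (\<lambda>m. lam (Suc m) powr \<tau>)" by (fact summ)
      fix \<delta> :: real assume \<delta>: "\<delta> > 0"
      have "(\<lambda>d. 1 * (A1 * (real d ^ (Q + 0) * \<theta>1 ^ d) + E * (real d ^ 0 * (1/2) ^ d))) \<longlonglongrightarrow> 0"
        by (rule boundlim)
      then have "eventually (\<lambda>d. 1 * (A1 * (real d ^ (Q + 0) * \<theta>1 ^ d) + E * (real d ^ 0 * (1/2) ^ d)) < 1) sequentially"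
        by (rule order_tendstoD) simp
      then have ev1: "eventually (\<lambda>d. G d \<le> 1) sequentially"
        using Gev by eventually_elim simp
      have "((\<lambda>d. (ln (C * (1 + K)) + q * ln (real d)) / real d) \<longlongrightarrow> 0) sequentially"
        by real_asymp
      then have ev2: "eventually (\<lambda>d. (ln (C * (1 + K)) + q * ln (real d)) / real d < \<delta>) sequentially"
        using \<delta> by (rule order_tendstoD)
      have "eventually (\<lambda>d. G d \<le> 1 \<and> (ln (C * (1 + K)) + q * ln (real d)) / real d < \<delta> \<and> d \<ge> 1) sequentially"
        using ev1 ev2 eventually_ge_at_top[of "1::nat"] by eventually_elim auto
      then obtain d0 where d0: "\<And>d. d \<ge> d0 \<Longrightarrow> G d \<le> 1 \<and> (ln (C * (1 + K)) + q * ln (real d)) / real d < \<delta> \<and> d \<ge> 1"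
        unfolding eventually_sequentially by blast
      show "\<exists>d0::nat. d0 \<ge> 1 \<and> (\<forall>d\<ge>d0. ln S - \<delta> \<le> (1 / real d) * (\<Sum>k=1..a_of I d. ln (S / lam k powr \<tau>)))"
      proof (intro exI[of _ "max d0 1"] conjI allI impI)
        show "max d0 1 \<ge> 1" by simp
        fix d assume "max d0 1 \<le> d"
        then have G1: "G d \<le> 1" and lnb: "(ln (C * (1 + K)) + q * ln (real d)) / real d < \<delta>" and d1: "d \<ge> 1"
          using d0[of d] by auto
        define a where "a = a_of I d"
        have ad: "a \<le> d" using ale[OF d1] by (simp add: a_def)
        define Pt where "Pt = (\<Prod>j=1..a. lam j powr \<tau>)"
        have lpos: "lam j powr \<tau> > 0" if "j \<in> {1..a}" for j using pos_lam[OF d1, of j] that by (simp add: a_def)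
        have Ptpos: "Pt > 0" unfolding Pt_def using lpos by (intro prod_pos) auto
        have lnPt: "ln Pt = (\<Sum>j=1..a. ln (lam j powr \<tau>))"
          unfolding Pt_def using lpos by (intro ln_prod) auto
        have Gt: "G d powr \<tau> \<le> 1"
        proof -
          have "G d powr \<tau> \<le> 1 powr \<tau>" using G1 Gpos[OF d1] tau0 by (intro powr_mono2) auto
          then show ?thesis by simp
        qed
        have Bd0: "C * real d powr q \<ge> 0" using C_pos by simp
        have "Pt * S ^ (d - a) \<le> C * real d powr q * (G d powr \<tau> + K)"
          using KEYS[OF d1] unfolding Pt_def a_def by (simp add: prod_powr_distrib)
        also have "\<dots> \<le> C * real d powr q * (1 + K)" using Gt Bd0 by (intro mult_left_mono) auto
        also have "\<dots> = C * (1 + K) * real d powr q" by simp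
        finally have ineq: "Pt * S ^ (d - a) \<le> C * (1 + K) * real d powr q" .
        have pos1: "0 < Pt * S ^ (d - a)" using Ptpos Spos by simp
        have "ln (Pt * S ^ (d - a)) \<le> ln (C * (1 + K) * real d powr q)"
          using ineq pos1 by (subst ln_le_cancel_iff) auto
        also have "\<dots> = ln (C * (1 + K)) + q * ln (real d)"
          using C_pos K0 d1 by (simp add: ln_mult)
        also have "\<dots> < \<delta> * real d" using lnb d1 by (simp add: field_simps)
        finally have "ln Pt + real (d - a) * ln S < \<delta> * real d"
          using Ptpos Spos by (simp add: ln_mult ln_realpow)
        then have L1: "ln Pt + (real d - real a) * ln S < \<delta> * real d" using ad by (simp add: of_nat_diff)
        have "(\<Sum>k=1..a. ln (S / lam k powr \<tau>)) = (\<Sum>k=1..a. ln S - ln (lam k powr \<tau>))"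
          using lpos Spos by (intro sum.cong refl) (simp add: ln_div)
        also have "\<dots> = real a * ln S - ln Pt" by (simp add: sum_subtractf lnPt)
        finally have R: "(\<Sum>k=1..a. ln (S / lam k powr \<tau>)) = real a * ln S - ln Pt" .
        have "real d * (ln S - \<delta>) \<le> real a * ln S - ln Pt" using L1 by (simp add: algebra_simps)
        then have "ln S - \<delta> \<le> (real a * ln S - ln Pt) / real d" using d1 by (simp add: field_simps)
        then show "ln S - \<delta> \<le> (1 / real d) * (\<Sum>k=1..a_of I d. ln (S / lam k powr \<tau>))"
          using R unfolding a_def by simp
      qed
    qed
  qed
  have partIII: "lam 1 < 1 \<or> filterlim (a_of I) at_top sequentially"
  proof (cases "lam 1 < 1")
    case True
    then show ?thesis by simp
  next
    case False
    then have l1: "lam 1 \<ge> 1" by simp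
    have pp: "p > p / 2" using p_pos by simp
    define S where "S = (\<Sum>m. lam (Suc m) powr p)"
    have summ: "summable (\<lambda>m. lam (Suc m) powr p)" using partII pp by blast
    have "(\<Sum>m<2. lam (Suc m) powr p) \<le> S"
      unfolding S_def by (rule sum_le_suminf[OF summ]) auto
    moreover have "(\<Sum>m<2. lam (Suc m) powr p) = lam 1 powr p + lam 2 powr p"
      by (simp add: numeral_2_eq_2)
    moreover have "lam 1 powr p \<ge> 1" using l1 p_pos by (simp add: ge_one_powr_ge_zero)
    moreover have "lam 2 powr p > 0" using lam2_pos by simp
    ultimately have S1: "S > 1" by linarith
    have term_le: "lam k powr p \<le> S" if "k \<ge> 1" for k
    proof -
      define k' where "k' = k - 1"
      have k: "k = Suc k'" using that by (simp add: k'_def)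
      have "(\<Sum>m\<in>{k'}. lam (Suc m) powr p) \<le> S"
        unfolding S_def by (rule sum_le_suminf[OF summ]) auto
      then show ?thesis using k by simp
    qed
    have tnn: "ln (S / lam k powr p) \<ge> 0" if "k \<ge> 1" for k
    proof (cases "lam k powr p = 0")
      case True then show ?thesis by simp
    next
      case False
      then have pos: "lam k powr p > 0" by simp
      then have "1 \<le> S / lam k powr p" using term_le[OF that] by (simp add: le_divide_eq_1_pos)
      then show ?thesis by (rule ln_ge_zero)
    qed
    have "filterlim (a_of I) at_top sequentially"
    proof (rule ccontr)
      assume nf: "\<not> filterlim (a_of I) at_top sequentially"
      then obtain Z where Z: "\<not> eventually (\<lambda>d. Z \<le> a_of I d) sequentially"
        unfolding filterlim_at_top by blast
      define K2 where "K2 = (\<Sum>k=1..Z. ln (S / lam k powr p))"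
      have "ln S > 0" using S1 by simp
      then have hS: "ln S / 2 > 0" by simp
      have "\<forall>\<delta>>0. \<exists>d0::nat. d0 \<ge> 1 \<and> (\<forall>d\<ge>d0. ln S - \<delta> \<le> (1 / real d) * (\<Sum>k=1..a_of I d. ln (S / lam k powr p)))"
        using partII pp unfolding S_def by blast
      then obtain d0 :: nat where d0: "d0 \<ge> 1" and
        H: "\<And>d. d \<ge> d0 \<Longrightarrow> ln S - ln S / 2 \<le> (1 / real d) * (\<Sum>k=1..a_of I d. ln (S / lam k powr p))"
        using hS by blast
      define n where "n = max d0 (nat \<lceil>2 * K2 / ln S\<rceil> + 1)"
      from Z have "\<exists>d\<ge>n. a_of I d < Z" unfolding eventually_sequentially by (auto simp: not_le)
      then obtain d where dn: "d \<ge> n" and aZ: "a_of I d < Z" by blast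
      have dd0: "d \<ge> d0" and d1: "d \<ge> 1" using dn d0 by (auto simp: n_def)
      have "d \<ge> nat \<lceil>2 * K2 / ln S\<rceil> + 1" using dn by (simp add: n_def)
      then have "real d \<ge> real (nat \<lceil>2 * K2 / ln S\<rceil> + 1)" by (simp only: of_nat_le_iff)
      moreover have "real (nat \<lceil>2 * K2 / ln S\<rceil>) \<ge> 2 * K2 / ln S" by (rule real_nat_ceiling_ge)
      ultimately have big: "real d > 2 * K2 / ln S" by simp
      have "(\<Sum>k=1..a_of I d. ln (S / lam k powr p)) \<le> K2"
        unfolding K2_def by (rule sum_mono2) (use aZ tnn in auto)
      then have "(1 / real d) * (\<Sum>k=1..a_of I d. ln (S / lam k powr p)) \<le> (1 / real d) * K2"
        by (rule mult_left_mono) simp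
      then have "ln S / 2 \<le> (1 / real d) * K2" using H[OF dd0] by linarith
      then have "ln S / 2 * real d \<le> K2" using d1 by (simp add: field_simps)
      moreover have "2 * K2 < real d * ln S" using big \<open>ln S > 0\<close> by (simp add: field_simps)
      moreover have "ln S / 2 * real d = (real d * ln S) / 2" by simp
      ultimately show False by linarith
    qed
    then show ?thesis by simp
  qed
  show ?thesis using partI partII partIII by blast
qed

end
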